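(* Let $\|\cdot\|$ be a norm on $\mathbb{C}^n$. There exists a sequence, indexed by positive integers $d$, of functions \[F_{2d}(z):=\sum_{i=1}^{N(2d)} w_i |\langle z,y_i\rangle|^{2d},\] with $N(2d)\in\mathbb{N}$, points $y_i\in\mathbb{C}^n$ and real positive weights $w_i$, such that: (1) $n_{2d}(z):=F_{2d}(z)^{1/(2d)}$ is a norm on $\mathbb{C}^n$; (2) $n_{2d}(z)\leq\|z\|$ for all $z\in\mathbb{C}^n$; (3) $n_{2d}(z)$ converges to $\|z\|$ as $d\to\infty$, uniformly on compact subsets of $\mathbb{C}^n$.
   Context: A norm on $\mathbb{C}^n$ is a complex norm, i.e. it satisfies $\|\lambda z\|=|\lambda|\|z\|$ for all complex $\lambda$. $\langle z,y\rangle$ denotes the standard Hermitian inner product on $\mathbb{C}^n$. *)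

theory Defs
  imports "HOL-Analysis.Analysis"
begin

definition herm_inner :: "complex ^ 'n \<Rightarrow> complex ^ 'n \<Rightarrow> complex" where
  "herm_inner z y = (\<Sum>i\<in>UNIV. z $ i * cnj (y $ i))"

definition is_cnorm :: "(complex ^ 'n \<Rightarrow> real) \<Rightarrow> bool" where
  "is_cnorm N \<longleftrightarrow>
     (\<forall>z. 0 \<le> N z) \<and>
     (\<forall>z. N z = 0 \<longleftrightarrow> z = 0) \<and>
     (\<forall>z w. N (z + w) \<le> N z + N w) \<and>
     (\<forall>c z. N (c *s z) = cmod c * N z)"

end

theory Submission imports Defs "HOL-Real_Asymp.Real_Asymp" begin


lemma hi_add: "herm_inner (z + v) y = herm_inner z y + herm_inner v y"
  unfolding herm_inner_def by (simp add: distrib_right sum.distrib)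

lemma hi_scale: "herm_inner (c *s z) y = c * herm_inner z y"
  unfolding herm_inner_def by (simp add: sum_distrib_left mult.assoc)

lemma hi_zero [simp]: "herm_inner 0 y = 0" "herm_inner z 0 = 0"
  unfolding herm_inner_def by simp_all

lemma hi_inner: "inner z y = Re (herm_inner z y)"
  unfolding herm_inner_def inner_vec_def inner_complex_def by (simp add: Re_sum)

lemma hi_cont: "continuous_on UNIV (\<lambda>z. herm_inner z y)"
  unfolding herm_inner_def by (intro continuous_intros)

lemma scaleR_vec_c: "(r::real) *\<^sub>R (z::complex^'n) = complex_of_real r *s z"
  by (simp add: vec_eq_iff) (simp add: scaleR_conv_of_real)

lemma powr_root: "0 < n \<Longrightarrow> 0 \<le> x \<Longrightarrow> x powr (1 / real n) = root n x"
  by (simp add: root_powr_inverse)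

lemma root_lim: "(\<lambda>d. root (2*d) (real d)) \<longlonglongrightarrow> 1"
proof -
  have "(\<lambda>d. real d powr (1 / real (2*d))) \<longlonglongrightarrow> 1" by real_asymp
  moreover have "\<forall>\<^sub>F d in sequentially. real d powr (1 / real (2*d)) = root (2*d) (real d)"
    using eventually_gt_at_top[of "0::nat"] by eventually_elim (simp add: root_powr_inverse)
  ultimately show ?thesis using tendsto_cong by force
qed

lemma minkowski:
  fixes a b :: "nat \<Rightarrow> real" and I :: "nat set" and w :: real and p :: nat
  assumes fin: "finite I" and a: "\<And>i. 0 \<le> a i" and b: "\<And>i. 0 \<le> b i"
    and w: "0 < w" and p: "even p" "0 < p"
  shows "root p (\<Sum>i\<in>I. w * (a i + b i) ^ p) \<le> root p (\<Sum>i\<in>I. w * a i ^ p) + root p (\<Sum>i\<in>I. w * b i ^ p)"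
proof -
  define A where "A = root p (\<Sum>i\<in>I. w * a i ^ p)"
  define B where "B = root p (\<Sum>i\<in>I. w * b i ^ p)"
  have SA: "0 \<le> (\<Sum>i\<in>I. w * a i ^ p)" using a w by (intro sum_nonneg) simp
  have SB: "0 \<le> (\<Sum>i\<in>I. w * b i ^ p)" using b w by (intro sum_nonneg) simp
  have A0: "0 \<le> A" "0 \<le> B" unfolding A_def B_def using SA SB by (simp_all add: real_root_ge_zero)
  have Ap: "A ^ p = (\<Sum>i\<in>I. w * a i ^ p)" "B ^ p = (\<Sum>i\<in>I. w * b i ^ p)"
    unfolding A_def B_def using SA SB p by auto
  show ?thesis
  proof (cases "A = 0")
    case True
    then have "(\<Sum>i\<in>I. w * a i ^ p) = 0" using Ap p by (metis power_0_left less_irrefl)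
    then have "\<forall>i\<in>I. w * a i ^ p = 0" using sum_nonneg_eq_0_iff[OF fin, of "\<lambda>i. w * a i ^ p"] a w by simp
    then have "\<forall>i\<in>I. a i = 0" using w by simp
    then show ?thesis using True by (simp add: A_def)
  next
    case An: False
    show ?thesis
    proof (cases "B = 0")
      case True
      then have "(\<Sum>i\<in>I. w * b i ^ p) = 0" using Ap p by (metis power_0_left less_irrefl)
      then have "\<forall>i\<in>I. w * b i ^ p = 0" using sum_nonneg_eq_0_iff[OF fin, of "\<lambda>i. w * b i ^ p"] b w by simp
      then have "\<forall>i\<in>I. b i = 0" using w by simp
      then show ?thesis using True by (simp add: B_def)
    next
      case Bn: False
      have Ap': "0 < A" "0 < B" using A0 An Bn by auto
      define l where "l = A / (A + B)"
      have l: "0 \<le> l" "0 \<le> 1 - l" using Ap' by (auto simp: l_def field_simps)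
      have cv: "convex_on UNIV (\<lambda>x::real. x ^ p)" using convex_power_even[OF p(1)] .
      have key: "((a i + b i) / (A + B)) ^ p \<le> l * (a i / A) ^ p + (1 - l) * (b i / B) ^ p" for i
      proof -
        have "(a i + b i) / (A + B) = l *\<^sub>R (a i / A) + (1 - l) *\<^sub>R (b i / B)"
        proof -
          have "1 - l = B / (A + B)" using Ap' by (simp add: l_def field_simps)
          then have e2: "(1 - l) * (b i / B) = b i / (A + B)" using Ap' by simp
          have e1: "l * (a i / A) = a i / (A + B)" using Ap' by (simp add: l_def)
          show ?thesis unfolding scaleR_conv_of_real of_real_eq_id id_def e1 e2
            by (simp add: add_divide_distrib)
        qed
        moreover have "(l *\<^sub>R (a i / A) + (1 - l) *\<^sub>R (b i / B)) ^ p \<le> l * (a i / A) ^ p + (1 - l) * (b i / B) ^ p"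
        proof -
          have "\<forall>x\<in>UNIV. \<forall>y\<in>UNIV. \<forall>u\<ge>0. \<forall>v\<ge>0. u + v = 1 \<longrightarrow> (u *\<^sub>R x + v *\<^sub>R y) ^ p \<le> u * x ^ p + v * (y::real) ^ p"
            using cv unfolding convex_on_def by blast
          from this[rule_format, of "a i / A" "b i / B" l "1 - l"] l show ?thesis by simp
        qed
        ultimately show ?thesis by simp
      qed
      have "(\<Sum>i\<in>I. w * ((a i + b i) / (A + B)) ^ p) \<le>
            (\<Sum>i\<in>I. w * (l * (a i / A) ^ p + (1 - l) * (b i / B) ^ p))"
        using key w by (intro sum_mono) simp
      also have "\<dots> = l * ((\<Sum>i\<in>I. w * a i ^ p) / A ^ p) + (1 - l) * ((\<Sum>i\<in>I. w * b i ^ p) / B ^ p)"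
        by (simp add: sum.distrib sum_distrib_left sum_divide_distrib power_divide algebra_simps)
      also have "\<dots> = 1" unfolding Ap[symmetric] using Ap' by simp
      finally have "(\<Sum>i\<in>I. w * ((a i + b i) / (A + B)) ^ p) \<le> 1" .
      moreover have "(\<Sum>i\<in>I. w * ((a i + b i) / (A + B)) ^ p) = (\<Sum>i\<in>I. w * (a i + b i) ^ p) / (A + B) ^ p"
        by (simp add: sum_divide_distrib power_divide)
      ultimately have "(\<Sum>i\<in>I. w * (a i + b i) ^ p) \<le> (A + B) ^ p"
        using Ap' by (simp add: divide_le_eq_1)
      then have "root p (\<Sum>i\<in>I. w * (a i + b i) ^ p) \<le> root p ((A + B) ^ p)"
        using p by (simp)
      also have "\<dots> = A + B" using p Ap' by (simp add: real_root_power_cancel)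
      finally show ?thesis by (simp add: A_def B_def)
    qed
  qed
qed




context
  fixes nrm :: "complex ^ 'n \<Rightarrow> real"
  assumes cn: "is_cnorm nrm"
begin

lemma nrm_nonneg: "0 \<le> nrm z" using cn by (simp add: is_cnorm_def)
lemma nrm_eq0: "nrm z = 0 \<longleftrightarrow> z = 0" using cn by (simp add: is_cnorm_def)
lemma nrm_tri: "nrm (z + w) \<le> nrm z + nrm w" using cn by (simp add: is_cnorm_def)
lemma nrm_scale: "nrm (c *s z) = cmod c * nrm z" using cn by (simp add: is_cnorm_def)
lemma nrm_0 [simp]: "nrm 0 = 0" using nrm_eq0 by simp
lemma nrm_minus: "nrm (- z) = nrm z"
  using nrm_scale[of "-1" z] by simp
lemma nrm_scaleR: "nrm (r *\<^sub>R z) = \<bar>r\<bar> * nrm z"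
  by (simp add: scaleR_vec_c nrm_scale)

lemma nrm_sum: "nrm (\<Sum>i\<in>S. f i) \<le> (\<Sum>i\<in>S. nrm (f i))"
proof (induction S rule: infinite_finite_induct)
  case (insert x F)
  then show ?case using nrm_tri[of "f x" "sum f F"] by simp
qed simp_all

lemma nrm_bound: "\<exists>C>0. \<forall>z. nrm z \<le> C * norm z"
proof -
  define C where "C = (\<Sum>i\<in>UNIV. nrm (axis i (1::complex))) + 1"
  have C0: "C > 0" unfolding C_def using nrm_nonneg by (smt (verit) sum_nonneg)
  have "nrm z \<le> C * norm z" for z
  proof -
    have "nrm z = nrm (\<Sum>i\<in>UNIV. (z$i) *s axis i 1)" by (simp add: basis_expansion)
    also have "\<dots> \<le> (\<Sum>i\<in>UNIV. nrm ((z$i) *s axis i 1))" by (rule nrm_sum)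
    also have "\<dots> = (\<Sum>i\<in>UNIV. cmod (z$i) * nrm (axis i 1))" by (simp add: nrm_scale)
    also have "\<dots> \<le> (\<Sum>i\<in>UNIV. norm z * nrm (axis i 1))"
      by (intro sum_mono mult_right_mono Finite_Cartesian_Product.norm_nth_le nrm_nonneg)
    also have "\<dots> = norm z * (C - 1)" by (simp add: C_def sum_distrib_left)
    also have "\<dots> \<le> C * norm z" by (simp add: algebra_simps)
    finally show ?thesis .
  qed
  then show ?thesis using C0 by blast
qed

lemma nrm_cont: "continuous_on UNIV nrm"
proof -
  obtain C where C: "C > 0" "\<And>z. nrm z \<le> C * norm z" using nrm_bound by blast
  have "C-lipschitz_on UNIV nrm"
  proof (rule lipschitz_onI)
    fix x y :: "complex^'n"
    have "nrm x \<le> nrm y + nrm (x - y)" using nrm_tri[of y "x - y"] by simp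
    moreover have "nrm y \<le> nrm x + nrm (y - x)" using nrm_tri[of x "y - x"] by simp
    moreover have "nrm (y - x) = nrm (x - y)" using nrm_minus[of "x - y"] by simp
    ultimately have "\<bar>nrm x - nrm y\<bar> \<le> nrm (x - y)" by linarith
    also have "\<dots> \<le> C * dist x y" using C(2)[of "x - y"] by (simp add: dist_norm)
    finally show "dist (nrm x) (nrm y) \<le> C * dist x y" by (simp add: dist_real_def)
  qed (use C in simp)
  then show ?thesis by (rule lipschitz_on_continuous_on)
qed

lemma approx_support:
  assumes z0: "z0 \<noteq> 0" and r: "0 < r" "r < 1"
  shows "\<exists>y. (\<forall>x. cmod (herm_inner x y) \<le> nrm x) \<and> r * nrm z0 < cmod (herm_inner z0 y)"
proof -
  define B where "B = {x. nrm x \<le> 1}"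
  have cvx: "convex B" unfolding B_def convex_def
  proof (intro allI impI ballI, safe)
    fix x y :: "complex^'n" and u v :: real
    assume "nrm x \<le> 1" "nrm y \<le> 1" "0 \<le> u" "0 \<le> v" "u + v = 1"
    then show "nrm (u *\<^sub>R x + v *\<^sub>R y) \<le> 1"
      using nrm_tri[of "u *\<^sub>R x" "v *\<^sub>R y"] nrm_scaleR[of u x] nrm_scaleR[of v y]
      by (smt (verit) mult_left_le mult_nonneg_nonneg)
  qed
  have cl: "closed B" unfolding B_def
    by (rule closed_Collect_le[OF nrm_cont continuous_on_const])
  have n0: "nrm z0 > 0" using z0 nrm_eq0 nrm_nonneg by (metis less_eq_real_def)
  define t where "t = 1 / (r * nrm z0)"
  have t0: "t > 0" using n0 r by (simp add: t_def)
  define p where "p = complex_of_real t *s z0"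
  have "t * nrm z0 = 1 / r" using n0 r by (simp add: t_def)
  then have np: "nrm p = 1 / r" using t0 by (simp add: p_def nrm_scale)
  have "p \<notin> B" using np r by (simp add: B_def)
  then obtain a b where ab: "inner a p < b" "\<forall>x\<in>B. b < inner a x"
    using separating_hyperplane_closed_point[OF cvx cl] by blast
  have "0 \<in> B" by (simp add: B_def)
  then have b0: "b < 0" using ab(2) by force
  define y where "y = (- 1 / (- b)) *\<^sub>R a"
  have iy: "inner x y = - inner a x / (- b)" for x
    by (simp add: y_def inner_commute)
  have hB: "Re (herm_inner x y) < 1" if "x \<in> B" for x
  proof -
    have "b * 1 < b * inner x y" using ab(2) that b0 iy[of x] by (simp add: field_simps)
    then show ?thesis using b0 by (simp add: hi_inner[symmetric] mult_less_cancel_left_neg)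
  qed
  have hp: "Re (herm_inner p y) > 1"
  proof -
    have "b * inner p y < b * 1" using ab(1) b0 iy[of p] by (simp add: field_simps)
    then show ?thesis using b0 by (simp add: hi_inner[symmetric] mult_less_cancel_left_neg)
  qed
  have bound: "cmod (herm_inner x y) \<le> nrm x" for x
  proof (cases "x = 0 \<or> herm_inner x y = 0")
    case True then show ?thesis using nrm_nonneg by auto
  next
    case False
    then have x0: "x \<noteq> 0" and h0: "herm_inner x y \<noteq> 0" by auto
    have nx: "nrm x > 0" using x0 nrm_eq0 nrm_nonneg by (metis less_eq_real_def)
    define h where "h = herm_inner x y"
    define u where "u = cnj h / (of_real (cmod h) * of_real (nrm x))"
    have cu: "cmod u = 1 / nrm x" using h0 nx by (simp add: u_def h_def norm_divide norm_mult)
    have "u *s x \<in> B" using cu nx by (simp add: B_def nrm_scale)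
    then have "Re (herm_inner (u *s x) y) < 1" by (rule hB)
    moreover have "herm_inner (u *s x) y = of_real (cmod h / nrm x)"
    proof -
      have "herm_inner (u *s x) y = u * h" by (simp add: hi_scale h_def)
      also have "\<dots> = cnj h * h / (of_real (cmod h) * of_real (nrm x))" by (simp add: u_def)
      also have "cnj h * h = of_real (cmod h ^ 2)" by (metis complex_norm_square mult.commute)
      finally show ?thesis using h0 nx by (simp add: h_def power2_eq_square)
    qed
    ultimately have "cmod h / nrm x < 1" by simp
    then show ?thesis using nx by (simp add: h_def)
  qed
  have "herm_inner p y = of_real t * herm_inner z0 y" by (simp add: p_def hi_scale)
  then have "1 < t * cmod (herm_inner z0 y)"
    using hp t0 by (smt (verit) Re_complex_of_real abs_Re_le_cmod norm_mult norm_of_real)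
  then have "r * nrm z0 < cmod (herm_inner z0 y)"
    using n0 r by (simp add: t_def field_simps)
  then show ?thesis using bound by blast
qed

end



lemma finite_family:
  fixes nrm :: "complex ^ 'n \<Rightarrow> real"
  assumes cn: "is_cnorm nrm" and r: "0 < r" "r < 1"
  shows "\<exists>M::nat\<ge>1. \<exists>Y. (\<forall>i x. cmod (herm_inner x (Y i)) \<le> nrm x) \<and>
           (\<forall>x. \<exists>i\<in>{1..M}. r * nrm x \<le> cmod (herm_inner x (Y i)))"
proof -
  have "\<forall>z0. \<exists>y. z0 \<noteq> 0 \<longrightarrow> (\<forall>x. cmod (herm_inner x y) \<le> nrm x) \<and> r * nrm z0 < cmod (herm_inner z0 y)"
  proof
    fix z0 :: "complex^'n"
    show "\<exists>y. z0 \<noteq> 0 \<longrightarrow> (\<forall>x. cmod (herm_inner x y) \<le> nrm x) \<and> r * nrm z0 < cmod (herm_inner z0 y)"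
    proof (cases "z0 = 0")
      case False
      then obtain y where "(\<forall>x. cmod (herm_inner x y) \<le> nrm x) \<and> r * nrm z0 < cmod (herm_inner z0 y)"
        using approx_support[OF cn False r] by blast
      then show ?thesis by blast
    qed simp
  qed
  then obtain yf where yf0: "\<forall>z0. z0 \<noteq> 0 \<longrightarrow> (\<forall>x. cmod (herm_inner x (yf z0)) \<le> nrm x) \<and> r * nrm z0 < cmod (herm_inner z0 (yf z0))"
    unfolding choice_iff by blast
  have yf: "\<And>z0 x. z0 \<noteq> 0 \<Longrightarrow> cmod (herm_inner x (yf z0)) \<le> nrm x"
    "\<And>z0. z0 \<noteq> 0 \<Longrightarrow> r * nrm z0 < cmod (herm_inner z0 (yf z0))"
    using yf0 by blast+
  define U where "U z0 = {x. r * nrm x < cmod (herm_inner x (yf z0))}" for z0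
  have opn: "open (U z0)" for z0 unfolding U_def
    by (intro open_Collect_less continuous_intros nrm_cont[OF cn] continuous_on_norm hi_cont)
  have cover: "sphere (0::complex^'n) 1 \<subseteq> (\<Union>z0\<in>sphere 0 1. U z0)"
  proof
    fix z assume "z \<in> sphere (0::complex^'n) 1"
    then have "z \<noteq> 0" by auto
    then have "z \<in> U z" using yf(2) by (simp add: U_def)
    then show "z \<in> (\<Union>z0\<in>sphere 0 1. U z0)" using \<open>z \<in> sphere 0 1\<close> by blast
  qed
  then obtain D where D: "D \<subseteq> sphere 0 1" "finite D" "sphere 0 1 \<subseteq> (\<Union>z0\<in>D. U z0)"
    using compactE_image[OF compact_sphere opn cover] by blast
  obtain h where h: "bij_betw h {1..card D} D" using ex_bij_betw_nat_finite_1[OF D(2)] by blast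
  define Y where "Y i = (if i \<in> {1..card D} then yf (h i) else 0)" for i
  have bnd: "cmod (herm_inner x (Y i)) \<le> nrm x" for i x
  proof (cases "i \<in> {1..card D}")
    case True
    then have "h i \<in> D" using h by (meson bij_betw_apply)
    then have "h i \<in> sphere 0 1" using D(1) by (rule subsetD[rotated])
    then have "h i \<noteq> 0" by (metis mem_sphere_0 norm_zero zero_neq_one)
    moreover have "Y i = yf (h i)" using True by (simp add: Y_def)
    ultimately show ?thesis using yf(1) by metis
  next
    case False
    then have "Y i = 0" unfolding Y_def by (simp only: if_False)
    then show ?thesis using nrm_nonneg[OF cn] by simp
  qed
  have cov: "\<exists>i\<in>{1..card D + 1}. r * nrm x \<le> cmod (herm_inner x (Y i))" for x
  proof (cases "x = 0")
    case True then show ?thesis by (intro bexI[of _ 1]) (auto simp: nrm_0[OF cn])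
  next
    case False
    define u where "u = (1 / norm x) *\<^sub>R x"
    have "u \<in> sphere 0 1" using False by (simp add: u_def)
    then obtain z0 where z0: "z0 \<in> D" "u \<in> U z0" using D(3) by blast
    obtain i where i: "i \<in> {1..card D}" "h i = z0" 
    proof -
      have "z0 \<in> h ` {1..card D}" using h z0(1) by (simp add: bij_betw_imp_surj_on)
      then show ?thesis using that by blast
    qed
    have xu: "x = norm x *\<^sub>R u" using False by (simp add: u_def)
    have "r * nrm u < cmod (herm_inner u (Y i))" using z0(2) i by (simp add: U_def Y_def)
    then have "norm x * (r * nrm u) \<le> norm x * cmod (herm_inner u (Y i))" by (intro mult_left_mono) auto
    moreover have "nrm x = norm x * nrm u" using nrm_scaleR[OF cn, of "norm x" u] xu by simp
    moreover have "cmod (herm_inner x (Y i)) = norm x * cmod (herm_inner u (Y i))"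
      using xu by (metis hi_scale norm_mult norm_of_real abs_norm_cancel scaleR_vec_c)
    ultimately have "r * nrm x \<le> cmod (herm_inner x (Y i))" by (simp add: algebra_simps)
    then show ?thesis using i(1) by auto
  qed
  show ?thesis
    apply (rule exI[of _ "card D + 1"])
    apply (intro conjI)
     apply simp
    apply (rule exI[of _ Y])
    using bnd cov by blast
qed




lemma family_props:
  fixes nrm :: "complex ^ 'n \<Rightarrow> real" and Y :: "nat \<Rightarrow> complex ^ 'n"
  assumes cn: "is_cnorm nrm" and M: "1 \<le> M" and d: "1 \<le> d" and r: "0 < r"
    and bnd: "\<forall>i x. cmod (herm_inner x (Y i)) \<le> nrm x"
    and cov: "\<forall>x. \<exists>i\<in>{1..M}. r * nrm x \<le> cmod (herm_inner x (Y i))"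
  defines "S \<equiv> \<lambda>z. (\<Sum>i=1..M. 1 / real M * cmod (herm_inner z (Y i)) ^ (2*d))"
  shows "is_cnorm (\<lambda>z. S z powr (1 / real (2*d)))"
    and "\<And>z. S z powr (1 / real (2*d)) \<le> nrm z"
    and "\<And>z. root (2*d) (1 / real M) * r * nrm z \<le> S z powr (1 / real (2*d))"
proof -
  define p where "p = 2 * d"
  have p: "0 < p" "even p" using d by (auto simp: p_def)
  have wpos: "0 < 1 / real M" using M by simp
  have S0: "0 \<le> S z" for z unfolding S_def using wpos by (intro sum_nonneg) simp
  have F: "S z powr (1 / real (2*d)) = root p (S z)" for z
    using powr_root[OF p(1) S0[of z]] by (simp add: p_def)
  have Sp: "S z = (\<Sum>i=1..M. 1 / real M * cmod (herm_inner z (Y i)) ^ p)" for z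
    by (simp add: S_def p_def)
  show "S z powr (1 / real (2*d)) \<le> nrm z" for z
  proof -
    have "S z \<le> (\<Sum>i=1..M. 1 / real M * nrm z ^ p)" unfolding Sp
      using bnd wpos by (intro sum_mono mult_left_mono power_mono) auto
    also have "\<dots> = nrm z ^ p" using M by simp
    finally have "root p (S z) \<le> root p (nrm z ^ p)" using p by simp
    also have "\<dots> = nrm z" using p nrm_nonneg[OF cn] by (simp add: real_root_power_cancel)
    finally show ?thesis using F by simp
  qed
  have lower: "root p (1 / real M) * r * nrm z \<le> root p (S z)" for z
  proof -
    obtain i where i: "i \<in> {1..M}" "r * nrm z \<le> cmod (herm_inner z (Y i))" using cov by blast
    have "1 / real M * (r * nrm z) ^ p \<le> 1 / real M * cmod (herm_inner z (Y i)) ^ p"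
      using i(2) r nrm_nonneg[OF cn, of z] wpos by (intro mult_left_mono power_mono) auto
    also have "\<dots> \<le> S z" unfolding Sp
      using i(1) wpos by (intro member_le_sum) auto
    finally have "root p (1 / real M * (r * nrm z) ^ p) \<le> root p (S z)" using p by simp
    moreover have "root p (1 / real M * (r * nrm z) ^ p) = root p (1 / real M) * (r * nrm z)"
      using real_root_mult[of p "1 / real M" "(r * nrm z) ^ p"]
        real_root_power_cancel[OF p(1), of "r * nrm z"] r nrm_nonneg[OF cn, of z] by simp
    ultimately show ?thesis by (simp add: mult.assoc)
  qed
  then show "root (2*d) (1 / real M) * r * nrm z \<le> S z powr (1 / real (2*d))" for z
    using F by (simp add: p_def)
  show "is_cnorm (\<lambda>z. S z powr (1 / real (2*d)))"
    unfolding is_cnorm_def F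
  proof (intro conjI allI)
    fix z
    show "0 \<le> root p (S z)" using S0 by (simp add: real_root_ge_zero)
    show "root p (S z) = 0 \<longleftrightarrow> z = 0"
    proof
      assume "root p (S z) = 0"
      then have "S z = 0" using p by simp
      moreover have "root p (1 / real M) > 0" using wpos p by simp
      ultimately have "r * nrm z \<le> 0" using lower[of z] F
        by (smt (verit) mult_pos_pos mult_le_0_iff nrm_nonneg[OF cn] r real_root_zero \<open>root p (S z) = 0\<close>)
      then have "nrm z = 0" using r nrm_nonneg[OF cn, of z] by (simp add: mult_le_0_iff)
      then show "z = 0" using nrm_eq0[OF cn] by simp
    next
      assume "z = 0"
      then show "root p (S z) = 0" using p by (simp add: Sp)
    qed
  next
    fix z w
    have "S (z + w) \<le> (\<Sum>i=1..M. 1 / real M * (cmod (herm_inner z (Y i)) + cmod (herm_inner w (Y i))) ^ p)"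
      unfolding Sp using wpos
      by (intro sum_mono mult_left_mono power_mono) (auto simp: hi_add norm_triangle_ineq)
    then have "root p (S (z + w)) \<le> root p (\<Sum>i=1..M. 1 / real M * (cmod (herm_inner z (Y i)) + cmod (herm_inner w (Y i))) ^ p)"
      using p by simp
    also have "\<dots> \<le> root p (S z) + root p (S w)" unfolding Sp
      by (rule minkowski[OF _ _ _ wpos p(2) p(1)]) auto
    finally show "root p (S (z + w)) \<le> root p (S z) + root p (S w)" .
  next
    fix c z
    have "S (c *s z) = cmod c ^ p * S z" unfolding Sp
      by (simp add: hi_scale norm_mult power_mult_distrib sum_distrib_left algebra_simps)
    then show "root p (S (c *s z)) = cmod c * root p (S z)"
      using p by (simp add: real_root_mult real_root_power_cancel)
  qed
qed




theorem theorem4p5: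
  fixes nrm :: "complex ^ 'n \<Rightarrow> real"
  assumes "is_cnorm nrm"
  shows "\<exists>(N :: nat \<Rightarrow> nat) (w :: nat \<Rightarrow> nat \<Rightarrow> real) (y :: nat \<Rightarrow> nat \<Rightarrow> complex ^ 'n).
    (\<forall>d\<ge>1. \<forall>i\<in>{1..N d}. 0 < w d i) \<and>
    (\<forall>d\<ge>1. is_cnorm (\<lambda>z. (\<Sum>i=1..N d. w d i * cmod (herm_inner z (y d i)) ^ (2*d)) powr (1 / real (2*d)))) \<and>
    (\<forall>d\<ge>1. \<forall>z. (\<Sum>i=1..N d. w d i * cmod (herm_inner z (y d i)) ^ (2*d)) powr (1 / real (2*d)) \<le> nrm z) \<and>
    (\<forall>K. compact K \<longrightarrow>
       uniform_limit K (\<lambda>d z. (\<Sum>i=1..N d. w d i * cmod (herm_inner z (y d i)) ^ (2*d)) powr (1 / real (2*d))) nrm sequentially)"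
proof -
  note cn = assms
  define rr where "rr k = 1 - 1 / (real k + 2)" for k :: nat
  have rr: "0 < rr k" "rr k < 1" for k by (auto simp: rr_def field_simps)
  have "\<forall>k. \<exists>MY :: nat \<times> (nat \<Rightarrow> complex ^ 'n). 1 \<le> fst MY \<and> (\<forall>i x. cmod (herm_inner x (snd MY i)) \<le> nrm x) \<and>
           (\<forall>x. \<exists>i\<in>{1..fst MY}. rr k * nrm x \<le> cmod (herm_inner x (snd MY i)))"
  proof
    fix k
    obtain M :: nat and Y where "1 \<le> M" "\<forall>i x. cmod (herm_inner x (Y i)) \<le> nrm x"
      "\<forall>x. \<exists>i\<in>{1..M}. rr k * nrm x \<le> cmod (herm_inner x (Y i))"
      using finite_family[OF cn rr(1) rr(2), of k] by blast
    then show "\<exists>MY :: nat \<times> (nat \<Rightarrow> complex ^ 'n). 1 \<le> fst MY \<and> (\<forall>i x. cmod (herm_inner x (snd MY i)) \<le> nrm x) \<and>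
           (\<forall>x. \<exists>i\<in>{1..fst MY}. rr k * nrm x \<le> cmod (herm_inner x (snd MY i)))"
      by (intro exI[of _ "(M, Y)"]) simp
  qed
  then obtain MY :: "nat \<Rightarrow> nat \<times> (nat \<Rightarrow> complex ^ 'n)" where MY: "\<And>k. 1 \<le> fst (MY k)" "\<And>k. \<forall>i x. cmod (herm_inner x (snd (MY k) i)) \<le> nrm x"
    "\<And>k. \<forall>x. \<exists>i\<in>{1..fst (MY k)}. rr k * nrm x \<le> cmod (herm_inner x (snd (MY k) i))"
    unfolding choice_iff by blast
  define MM where "MM k = fst (MY k)" for k
  define YY where "YY k = snd (MY k)" for k
  define kd where "kd d = Max {k. k \<le> d \<and> MM k \<le> d}" for d
  define N where "N d = MM (kd d)" for d
  define w where "w d i = 1 / real (N d)" for d i :: nat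
  define y where "y d i = YY (kd d) i" for d i
  define F where "F d z = (\<Sum>i=1..N d. w d i * cmod (herm_inner z (y d i)) ^ (2*d)) powr (1 / real (2*d))" for d z
  have Fd: "F d z = (\<Sum>i=1..MM (kd d). 1 / real (MM (kd d)) * cmod (herm_inner z (YY (kd d) i)) ^ (2*d)) powr (1 / real (2*d))" for d z
    by (simp add: F_def N_def w_def y_def)
  note fp = family_props[OF cn MY(1) _ rr(1) MY(2) MY(3), folded MM_def YY_def]
  have P1: "\<forall>d\<ge>1. \<forall>i\<in>{1..N d}. 0 < w d i"
    using MY(1) by (auto simp: w_def N_def MM_def)
  have P2: "\<forall>d\<ge>1. is_cnorm (F d)"
    unfolding Fd using fp(1) by blast
  have P3: "\<forall>d\<ge>1. \<forall>z. F d z \<le> nrm z"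
    unfolding Fd using fp(2) by blast
  have P4: "uniform_limit K F nrm sequentially" if K: "compact K" for K
    unfolding uniform_limit_iff
  proof (intro allI impI)
    fix e :: real assume e: "0 < e"
    obtain b where b: "b > 0" "\<forall>z\<in>K. norm z \<le> b"
      using compact_imp_bounded[OF K] bounded_pos by blast
    obtain C where C: "C > 0" "\<And>z. nrm z \<le> C * norm z" using nrm_bound[OF cn] by blast
    define Bd where "Bd = C * b"
    have Bd: "Bd > 0" "\<forall>z\<in>K. nrm z \<le> Bd"
      using C b by (auto simp: Bd_def intro: order.trans[OF C(2)] mult_left_mono)
    obtain k0 :: nat where k0: "2 * Bd / e < real k0" using reals_Archimedean2 by blast
    define \<delta> where "\<delta> = 1 / (real k0 + 2)"
    have \<delta>: "0 < \<delta>" "\<delta> < 1" "2 * \<delta> * Bd < e"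
    proof -
      show "0 < \<delta>" "\<delta> < 1" by (auto simp: \<delta>_def field_simps)
      have "2 * Bd < e * real k0" using k0 e by (simp add: field_simps)
      also have "\<dots> < e * (real k0 + 2)" using e by simp
      finally show "2 * \<delta> * Bd < e" by (simp add: \<delta>_def field_simps)
    qed
    have ev: "\<forall>\<^sub>F d in sequentially. k0 \<le> d \<and> MM k0 \<le> d \<and> 1 \<le> d \<and> root (2*d) (real d) < 1 + \<delta>"
    proof -
      have lim: "\<forall>\<^sub>F d in sequentially. root (2*d) (real d) < 1 + \<delta>"
        using order_tendstoD(2)[OF root_lim, of "1 + \<delta>"] \<delta>(1) by simp
      show ?thesis
        using eventually_ge_at_top[of k0] eventually_ge_at_top[of "MM k0"] eventually_ge_at_top[of "1::nat"] lim
        by eventually_elim auto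
    qed
    show "\<forall>\<^sub>F d in sequentially. \<forall>z\<in>K. dist (F d z) (nrm z) < e"
      using ev
    proof eventually_elim
      case (elim d)
      then have d: "k0 \<le> d" "MM k0 \<le> d" "1 \<le> d" "root (2*d) (real d) < 1 + \<delta>" by auto
      define A where "A = {k. k \<le> d \<and> MM k \<le> d}"
      have finA: "finite A" unfolding A_def by auto
      have k0A: "k0 \<in> A" using d by (simp add: A_def)
      have kdA: "kd d \<in> A" unfolding kd_def A_def[symmetric] using finA k0A by (intro Max_in) auto
      have kdk0: "k0 \<le> kd d" unfolding kd_def A_def[symmetric] using finA k0A by (intro Max_ge)
      have Mle: "MM (kd d) \<le> d" and M1: "1 \<le> MM (kd d)" using kdA MY(1) by (auto simp: A_def MM_def)
      have rk: "1 - \<delta> \<le> rr (kd d)" using kdk0 by (simp add: rr_def \<delta>_def field_simps)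
      have q0: "0 < root (2*d) (real d)" using d by simp
      have "root (2*d) (1 / real d) \<le> root (2*d) (1 / real (MM (kd d)))"
        using Mle M1 d by (simp add: frac_le)
      moreover have "root (2*d) (1 / real d) = 1 / root (2*d) (real d)"
        using d(3) by (simp add: real_root_divide)
      moreover have "1 - \<delta> \<le> 1 / root (2*d) (real d)"
      proof -
        have "(1 - \<delta>) * root (2*d) (real d) \<le> (1 - \<delta>) * (1 + \<delta>)"
          using d(4) \<delta> by (intro mult_left_mono) auto
        also have "\<dots> \<le> 1" by (simp add: algebra_simps)
        finally show ?thesis using q0 by (simp add: field_simps)
      qed
      ultimately have rt: "1 - \<delta> \<le> root (2*d) (1 / real (MM (kd d)))" by linarith
      show "\<forall>z\<in>K. dist (F d z) (nrm z) < e"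
      proof
        fix z assume z: "z \<in> K"
        have n0: "0 \<le> nrm z" using nrm_nonneg[OF cn] .
        have up: "F d z \<le> nrm z" using P3 d(3) by blast
        have "(1 - \<delta>) * (1 - \<delta>) * nrm z \<le> root (2*d) (1 / real (MM (kd d))) * rr (kd d) * nrm z"
          using rt rk \<delta> n0 by (intro mult_right_mono mult_mono) auto
        also have "\<dots> \<le> F d z" unfolding Fd using fp(3)[OF d(3)] by blast
        finally have lo: "(1 - \<delta>) * (1 - \<delta>) * nrm z \<le> F d z" .
        have "nrm z - F d z \<le> nrm z - (1 - \<delta>) * (1 - \<delta>) * nrm z" using lo by linarith
        also have "\<dots> \<le> 2 * \<delta> * nrm z" using \<delta> n0 by (simp add: algebra_simps mult_nonneg_nonneg)
        also have "\<dots> \<le> 2 * \<delta> * Bd" using Bd z \<delta> by (intro mult_left_mono) auto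
        finally show "dist (F d z) (nrm z) < e" using up \<delta>(3) by (simp add: dist_real_def)
      qed
    qed
  qed
  show ?thesis
    apply (rule exI[of _ N], rule exI[of _ w], rule exI[of _ y])
    using P1 P2 P3 P4 unfolding F_def by blast
qed


end
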